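(* There exists a $5$-ary $2$-frameproof code of length $4$ and cardinality $32$ satisfying Property $P(2)$.
   Context: For $P\subseteq F^l$ over a finite alphabet $F$, $desc(P)=\{x\in F^l: \text{for every } i \text{ there is } y\in P \text{ with } x_i=y_i\}$. For an integer $c\geq 2$, a $c$-frameproof code is a subset $C\subseteq F^l$ with $desc(P)\cap C=P$ for every $P\subseteq C$ with $|P|\leq c$; it is $q$-ary if $|F|=q$. A $c$-frameproof code $C$ over an alphabet $S$ satisfies Property $P(t)$ if there is a special element $\infty\in S$ such that every codeword has at most $t-1$ coordinates equal to $\infty$ and any two codewords that agree in $t$ coordinates where their common value is not $\infty$ are equal. *)

theory Defs
  imports "HOL-Library.FuncSet"
begin

definition words :: "'a set \<Rightarrow> nat \<Rightarrow> (nat \<Rightarrow> 'a) set" where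
  "words F l = PiE {0..<l} (\<lambda>_. F)"

definition desc :: "'a set \<Rightarrow> nat \<Rightarrow> (nat \<Rightarrow> 'a) set \<Rightarrow> (nat \<Rightarrow> 'a) set" where
  "desc F l P = {x \<in> words F l. \<forall>i<l. \<exists>y\<in>P. x i = y i}"

definition frameproof :: "nat \<Rightarrow> 'a set \<Rightarrow> nat \<Rightarrow> (nat \<Rightarrow> 'a) set \<Rightarrow> bool" where
  "frameproof c F l C \<longleftrightarrow> C \<subseteq> words F l \<and>
     (\<forall>P. P \<subseteq> C \<and> card P \<le> c \<longrightarrow> desc F l P \<inter> C = P)"

definition propertyP :: "nat \<Rightarrow> 'a set \<Rightarrow> nat \<Rightarrow> (nat \<Rightarrow> 'a) set \<Rightarrow> bool" where
  "propertyP t S l C \<longleftrightarrow> (\<exists>inf \<in> S.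
     (\<forall>x\<in>C. card {i \<in> {0..<l}. x i = inf} \<le> t - 1) \<and>
     (\<forall>x\<in>C. \<forall>y\<in>C. card {i \<in> {0..<l}. x i = y i \<and> x i \<noteq> inf} \<ge> t \<longrightarrow> x = y))"

end

theory Submission
  imports Defs
begin

definition L :: "nat list list" where
  "L = [[0,0,0,4], [0,1,4,2], [0,2,3,4], [0,3,4,3], [0,4,1,0], [0,4,2,1], [1,0,3,4], [1,1,4,0], [1,2,0,4], [1,3,4,1], [1,4,1,2], [1,4,2,3], [2,0,4,0], [2,1,1,4], [2,2,4,2], [2,3,2,4], [2,4,0,3], [2,4,3,1], [3,0,4,3], [3,1,2,4], [3,2,4,1], [3,3,1,4], [3,4,0,0], [3,4,3,2], [4,0,1,1], [4,0,2,2], [4,1,0,1], [4,1,3,3], [4,2,1,3], [4,2,2,0], [4,3,0,2], [4,3,3,0]]"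

definition toW :: "nat list \<Rightarrow> nat \<Rightarrow> nat" where
  "toW xs = (\<lambda>i. if i < 4 then xs ! i else undefined)"

lemma card_filter_upt: "card {i \<in> {0..<n}. P i} = length (filter P [0..<n])"
proof -
  have "{i \<in> {0..<n}. P i} = set (filter P [0..<n])" by auto
  then show ?thesis using distinct_card[of "filter P [0..<n]"] by simp
qed

lemma L_len: "\<forall>xs\<in>set L. length xs = 4" by (simp add: L_def)
lemma L_range: "\<forall>xs\<in>set L. \<forall>a\<in>set xs. a < 5" by (simp add: L_def)
lemma L_dist: "distinct L" by code_simp
lemma L_inf: "\<forall>xs\<in>set L. length (filter (\<lambda>i. xs ! i = 4) [0..<4]) \<le> 1"
  by code_simp
lemma L_pair: "\<forall>xs\<in>set L. \<forall>ys\<in>set L. 2 \<le> length (filter (\<lambda>i. xs ! i = ys ! i \<and> xs ! i \<noteq> 4) [0..<4]) \<longrightarrow> xs = ys"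
  by code_simp

lemma toW_inj: "inj_on toW (set L)"
proof
  fix xs ys assume xs: "xs \<in> set L" and ys: "ys \<in> set L" and e: "toW xs = toW ys"
  have "length xs = 4" "length ys = 4" using xs ys L_len by auto
  moreover have "\<forall>i<4. xs ! i = ys ! i" using e unfolding toW_def by (metis)
  ultimately show "xs = ys" by (simp add: nth_equalityI)
qed

lemma toW_words: "xs \<in> set L \<Longrightarrow> toW xs \<in> words {0..<5} 4"
proof -
  assume xs: "xs \<in> set L"
  have l: "length xs = 4" using xs L_len by auto
  have "\<forall>i<4. xs ! i < 5" using xs L_range l by (metis nth_mem)
  then show ?thesis unfolding words_def toW_def by (auto simp: PiE_def extensional_def)
qed

lemma prop_C: "propertyP 2 {0..<5} 4 (toW ` set L)"
  unfolding propertyP_def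
proof (rule bexI[where x=4], intro conjI ballI)
  fix x assume "x \<in> toW ` set L"
  then obtain xs where xs: "xs \<in> set L" and x: "x = toW xs" by auto
  have "{i \<in> {0..<4}. x i = 4} = {i \<in> {0..<4}. xs ! i = 4}" using x by (auto simp: toW_def)
  moreover have "card {i \<in> {0..<4}. xs ! i = 4} \<le> 1"
    using L_inf xs unfolding card_filter_upt by blast
  ultimately show "card {i \<in> {0..<4}. x i = 4} \<le> 2 - 1" by simp
next
  fix x y assume "x \<in> toW ` set L" "y \<in> toW ` set L"
  then obtain xs ys where xs: "xs \<in> set L" and x: "x = toW xs"
    and ys: "ys \<in> set L" and y: "y = toW ys" by auto
  have "{i \<in> {0..<4}. x i = y i \<and> x i \<noteq> 4} = {i \<in> {0..<4}. xs ! i = ys ! i \<and> xs ! i \<noteq> 4}"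
    using x y by (auto simp: toW_def)
  moreover have "2 \<le> card {i \<in> {0..<4}. xs ! i = ys ! i \<and> xs ! i \<noteq> 4} \<longrightarrow> xs = ys"
    using L_pair xs ys unfolding card_filter_upt by blast
  ultimately show "2 \<le> card {i \<in> {0..<4}. x i = y i \<and> x i \<noteq> 4} \<longrightarrow> x = y"
    using x y by (metis (no_types, lifting))
qed simp

lemma fp_from_P:
  assumes CW: "C \<subseteq> words F 4" and fin: "finite C" and PP: "propertyP 2 F 4 C"
  shows "frameproof 2 F 4 C"
  unfolding frameproof_def
proof (intro conjI allI impI CW)
  obtain inf where h1: "\<forall>x\<in>C. card {i \<in> {0..<4}. x i = inf} \<le> 1"
    and h2: "\<forall>x\<in>C. \<forall>y\<in>C. card {i \<in> {0..<4::nat}. x i = y i \<and> x i \<noteq> inf} \<ge> 2 \<longrightarrow> x = y"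
    using PP unfolding propertyP_def by auto
  fix P assume "P \<subseteq> C \<and> card P \<le> 2"
  then have PC: "P \<subseteq> C" and cP: "card P \<le> 2" by auto
  have finP: "finite P" using PC fin finite_subset by auto
  show "desc F 4 P \<inter> C = P"
  proof
    show "P \<subseteq> desc F 4 P \<inter> C" using PC CW unfolding desc_def by blast
  next
    show "desc F 4 P \<inter> C \<subseteq> P"
    proof
      fix x assume "x \<in> desc F 4 P \<inter> C"
      then have xC: "x \<in> C" and cov: "\<forall>i<4. \<exists>y\<in>P. x i = y i" unfolding desc_def by auto
      show "x \<in> P"
      proof (rule ccontr)
        assume nx: "x \<notin> P"
        define A where "A y = {i \<in> {0..<4::nat}. x i = y i \<and> x i \<noteq> inf}" for y
        have cA: "card (A y) \<le> 1" if "y \<in> P" for y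
        proof -
          have "y \<in> C" "x \<noteq> y" using that PC nx by auto
          then show ?thesis using h2 xC unfolding A_def by force
        qed
        have sub: "{i \<in> {0..<4}. x i \<noteq> inf} \<subseteq> (\<Union>y\<in>P. A y)"
          using cov unfolding A_def by fastforce
        have "card (\<Union>y\<in>P. A y) \<le> (\<Sum>y\<in>P. card (A y))" by (rule card_UN_le[OF finP])
        also have "\<dots> \<le> (\<Sum>y\<in>P. 1)" using cA by (intro sum_mono) auto
        also have "\<dots> \<le> 2" using cP by simp
        finally have u: "card (\<Union>y\<in>P. A y) \<le> 2" .
        have "card {i \<in> {0..<4}. x i \<noteq> inf} \<le> 2"
          proof -
          have "finite (\<Union>y\<in>P. A y)" using finP unfolding A_def by auto
          then show ?thesis using card_mono[OF _ sub] u by linarith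
        qed
        moreover have "card {i \<in> {0..<4::nat}. x i \<noteq> inf} + card {i \<in> {0..<4}. x i = inf} = 4"
        proof -
          have "card {i \<in> {0..<4::nat}. x i \<noteq> inf} + card {i \<in> {0..<4}. x i = inf}
              = card ({i \<in> {0..<4::nat}. x i \<noteq> inf} \<union> {i \<in> {0..<4}. x i = inf})"
            by (rule card_Un_disjoint[symmetric]) auto
          also have "({i \<in> {0..<4::nat}. x i \<noteq> inf} \<union> {i \<in> {0..<4}. x i = inf}) = {0..<4}" by auto
          finally show ?thesis by simp
        qed
        ultimately show False using h1 xC by fastforce
      qed
    qed
  qed
qed

theorem lemma3:
  shows "\<exists>(F :: nat set) C. finite F \<and> card F = 5 \<and> frameproof 2 F 4 C \<and> card C = 32
           \<and> propertyP 2 F 4 C"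
proof (intro exI conjI)
  show "finite {0..<5::nat}" by simp
  show "card {0..<5::nat} = 5" by simp
  show "propertyP 2 {0..<5} 4 (toW ` set L)" by (rule prop_C)
  show "frameproof 2 {0..<5} 4 (toW ` set L)"
    using toW_words prop_C by (intro fp_from_P) auto
  have "card (toW ` set L) = card (set L)" by (rule card_image[OF toW_inj])
  also have "\<dots> = length L" by (rule distinct_card[OF L_dist])
  also have "\<dots> = 32" by (simp add: L_def)
  finally show "card (toW ` set L) = 32" .
qed

end
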